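(* Fix $\alpha\in(0,1)$, a number of agents $M$, a measurable score $V:\mathcal X\times\mathcal Y\to\mathbb R$ and a test distribution $P_{\mathrm{test}}$ on $\mathcal X\times\mathcal Y$ such that the CDF $G(v)=P_{\mathrm{test}}(V(X,Y)\le v)$ is continuous. Consider a sequence of settings indexed by $t=1,2,\dots$: in setting $t$, agent $k$ has calibration sample size $n_{k,t}$ and calibration distribution $P^{\mathrm{cal}}_{k,t}$, the calibration samples are independent across agents and i.i.d. within each agent, and $\widehat q_t=\sum_k\frac{n_{k,t}}{N_t}\widehat q_{k,t}$ and $\widehat q_{\mathrm{mix},t}=\widehat F_{\mathrm{mix},t}^{-1}(1-\alpha)$ are the aggregated threshold and the empirical mixture quantile. Assume that as $t\to\infty$: $n_{k,t}\to\infty$ for every $k$; $\sup_k d_{\mathrm{TV}}(P^{\mathrm{cal}}_{k,t},P_{\mathrm{test}})\to0$; and $|\widehat q_t-\widehat q_{\mathrm{mix},t}|\to0$ in probability. Then \[ \Big|\mathbb P\big(Y\in C_{\widehat q_t}(X)\big)-(1-\alpha)\Big|\to0, \] where $(X,Y)\sim P_{\mathrm{test}}$ is independent of the calibration data.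
   Context: For $q\in\mathbb R$, $C_q(x)=\{y: V(x,y)\le q\}$. In setting $t$, agent $k$'s calibration scores are $V_{k,i}=V(x_{k,i},y_{k,i})$, $i=1,\dots,n_{k,t}$; $N_t=\sum_k n_{k,t}$; the local threshold $\widehat q_{k,t}$ is the $\lceil (n_{k,t}+1)(1-\alpha)\rceil$-th smallest score of agent $k$ (defined once $n_{k,t}$ is large enough that this index is at most $n_{k,t}$); $\widehat F_{k,t}(v)=\frac1{n_{k,t}}\sum_i\mathbf 1\{V_{k,i}\le v\}$, $\widehat F_{\mathrm{mix},t}=\sum_k\frac{n_{k,t}}{N_t}\widehat F_{k,t}$, and $F^{-1}(p)=\inf\{v: F(v)\ge p\}$. $d_{\mathrm{TV}}(P,Q)=\sup_A|P(A)-Q(A)|$. (The paper's regime has the Dirichlet concentration parameter of the calibration partition tending to infinity, which is what drives the total variation distances to zero.) *)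

theory Defs
  imports "HOL-Probability.Probability"
begin

definition C_set :: "('x \<times> 'y \<Rightarrow> real) \<Rightarrow> real \<Rightarrow> 'x \<Rightarrow> 'y set" where
  "C_set V q x = {y. V (x, y) \<le> q}"

definition kth_smallest :: "real list \<Rightarrow> nat \<Rightarrow> real" where
  "kth_smallest xs j = sort xs ! (j - 1)"

definition local_thr :: "('z \<Rightarrow> real) \<Rightarrow> real \<Rightarrow> nat \<Rightarrow> (nat \<Rightarrow> 'z) \<Rightarrow> real" where
  "local_thr V \<alpha> n s =
     kth_smallest (map (\<lambda>i. V (s i)) [0..<n]) (nat \<lceil>(real n + 1) * (1 - \<alpha>)\<rceil>)"

definition ecdf :: "('z \<Rightarrow> real) \<Rightarrow> nat \<Rightarrow> (nat \<Rightarrow> 'z) \<Rightarrow> real \<Rightarrow> real" where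
  "ecdf V n s v = real (card {i. i < n \<and> V (s i) \<le> v}) / real n"

definition total_size :: "nat \<Rightarrow> (nat \<Rightarrow> nat) \<Rightarrow> nat" where
  "total_size M n = (\<Sum>k<M. n k)"

text \<open>Calibration data d: agent k's i-th sample is d (k, i).\<close>
definition mix_cdf :: "('z \<Rightarrow> real) \<Rightarrow> nat \<Rightarrow> (nat \<Rightarrow> nat) \<Rightarrow> (nat \<times> nat \<Rightarrow> 'z) \<Rightarrow> real \<Rightarrow> real" where
  "mix_cdf V M n d v =
     (\<Sum>k<M. (real (n k) / real (total_size M n)) * ecdf V (n k) (\<lambda>i. d (k, i)) v)"

definition gen_inv :: "(real \<Rightarrow> real) \<Rightarrow> real \<Rightarrow> real" where
  "gen_inv F p = Inf {v. F v \<ge> p}"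

definition agg_thr :: "('z \<Rightarrow> real) \<Rightarrow> real \<Rightarrow> nat \<Rightarrow> (nat \<Rightarrow> nat) \<Rightarrow> (nat \<times> nat \<Rightarrow> 'z) \<Rightarrow> real" where
  "agg_thr V \<alpha> M n d =
     (\<Sum>k<M. (real (n k) / real (total_size M n)) * local_thr V \<alpha> (n k) (\<lambda>i. d (k, i)))"

definition mix_thr :: "('z \<Rightarrow> real) \<Rightarrow> real \<Rightarrow> nat \<Rightarrow> (nat \<Rightarrow> nat) \<Rightarrow> (nat \<times> nat \<Rightarrow> 'z) \<Rightarrow> real" where
  "mix_thr V \<alpha> M n d = gen_inv (mix_cdf V M n d) (1 - \<alpha>)"

definition cal_measure :: "nat \<Rightarrow> (nat \<Rightarrow> nat) \<Rightarrow> (nat \<Rightarrow> 'z measure) \<Rightarrow> (nat \<times> nat \<Rightarrow> 'z) measure" where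
  "cal_measure M n Pc = PiM {(k, i). k < M \<and> i < n k} (\<lambda>(k, i). Pc k)"

definition tv_dist :: "'z measure \<Rightarrow> 'z measure \<Rightarrow> real" where
  "tv_dist P Q = (SUP A \<in> sets P. \<bar>measure P A - measure Q A\<bar>)"

end

theory Submission
  imports Defs
begin

lemma sorted_nth_le_iff:
  fixes ys :: "real list"
  assumes "sorted ys" "1 \<le> j" "j \<le> length ys"
  shows "ys ! (j-1) \<le> v \<longleftrightarrow> j \<le> card {i. i < length ys \<and> ys ! i \<le> v}"
proof
  assume h: "ys ! (j-1) \<le> v"
  have "{..<j} \<subseteq> {i. i < length ys \<and> ys ! i \<le> v}"
  proof
    fix i assume "i \<in> {..<j}"
    hence "i \<le> j - 1" "j - 1 < length ys" using assms by auto
    hence "ys ! i \<le> ys ! (j-1)" using sorted_nth_mono[OF assms(1)] by blast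
    thus "i \<in> {i. i < length ys \<and> ys ! i \<le> v}" using h \<open>i \<in> {..<j}\<close> assms by auto
  qed
  from card_mono[OF _ this] show "j \<le> card {i. i < length ys \<and> ys ! i \<le> v}" by simp
next
  assume h: "j \<le> card {i. i < length ys \<and> ys ! i \<le> v}"
  show "ys ! (j-1) \<le> v"
  proof (rule ccontr)
    assume c: "\<not> ys ! (j-1) \<le> v"
    have "{i. i < length ys \<and> ys ! i \<le> v} \<subseteq> {..<j-1}"
    proof
      fix i assume i: "i \<in> {i. i < length ys \<and> ys ! i \<le> v}"
      show "i \<in> {..<j-1}"
      proof (rule ccontr)
        assume "i \<notin> {..<j-1}"
        hence "ys ! (j-1) \<le> ys ! i" using sorted_nth_mono[OF assms(1)] i by auto
        thus False using i c by auto
      qed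
    qed
    from card_mono[OF _ this] have "card {i. i < length ys \<and> ys ! i \<le> v} \<le> j - 1" by simp
    thus False using h assms by linarith
  qed
qed

lemma kth_le_iff:
  assumes "1 \<le> j" "j \<le> length xs"
  shows "kth_smallest xs j \<le> v \<longleftrightarrow> j \<le> card {i. i < length xs \<and> xs ! i \<le> v}"
proof -
  have "kth_smallest xs j \<le> v \<longleftrightarrow> j \<le> card {i. i < length (sort xs) \<and> sort xs ! i \<le> v}"
    unfolding kth_smallest_def using assms by (intro sorted_nth_le_iff) auto
  also have "card {i. i < length (sort xs) \<and> sort xs ! i \<le> v} = length (filter (\<lambda>x. x \<le> v) (sort xs))"
    by (simp add: length_filter_conv_card)
  also have "\<dots> = length (filter (\<lambda>x. x \<le> v) xs)"
    by (metis filter_sort length_sort)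
  also have "\<dots> = card {i. i < length xs \<and> xs ! i \<le> v}"
    by (simp add: length_filter_conv_card)
  finally show ?thesis .
qed

lemma local_thr_le_iff:
  assumes "1 \<le> nat \<lceil>(real n + 1) * (1 - \<alpha>)\<rceil>" "nat \<lceil>(real n + 1) * (1 - \<alpha>)\<rceil> \<le> n"
  shows "local_thr V \<alpha> n s \<le> v \<longleftrightarrow> nat \<lceil>(real n + 1) * (1 - \<alpha>)\<rceil> \<le> card {i. i < n \<and> V (s i) \<le> v}"
proof -
  have e: "{i. i < n \<and> map (\<lambda>i. V (s i)) [0..<n] ! i \<le> v} = {i. i < n \<and> V (s i) \<le> v}"
    by auto
  show ?thesis
    unfolding local_thr_def using assms by (subst kth_le_iff) (simp_all only: length_map length_upt diff_zero e)
qed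

lemma indep_coords:
  fixes N :: "'i \<Rightarrow> 'z measure"
  assumes N: "\<And>i. i \<in> I \<Longrightarrow> prob_space (N i)" and fin: "finite I" and JI: "J \<subseteq> I" and Jne: "J \<noteq> {}"
  shows "prob_space.indep_vars (PiM I N) N (\<lambda>i x. x i) J"
proof -
  obtain j0 where j0: "j0 \<in> J" using Jne by auto
  define N' where "N' = (\<lambda>i. if i \<in> I then N i else N j0)"
  have N': "prob_space (N' i)" for i using N j0 JI by (auto simp: N'_def)
  interpret product_prob_space N' I
    using N' by (auto simp: product_prob_space_def product_sigma_finite_def product_prob_space_axioms_def intro: prob_space_imp_sigma_finite)
  have eqI: "PiM I N = PiM I N'" by (intro PiM_cong) (auto simp: N'_def)
  have eqJ: "PiM J N = PiM J N'" using JI by (intro PiM_cong) (auto simp: N'_def)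
  have "indep_vars N' (\<lambda>i x. x i) J"
  proof (subst indep_vars_iff_distr_eq_PiM'[OF Jne])
    show "random_variable (N' i) (\<lambda>x. x i)" if "i \<in> J" for i
      using that JI by (auto intro: measurable_component_singleton)
    have "distr (Pi\<^sub>M I N') (Pi\<^sub>M J N') (\<lambda>x. \<lambda>i\<in>J. x i) = PiM J N'"
      using distr_PiM_restrict_finite[OF finite_subset[OF JI fin] JI] by (simp add: restrict_def)
    also have "\<dots> = (\<Pi>\<^sub>M i\<in>J. distr (Pi\<^sub>M I N') (N' i) (\<lambda>x. x i))"
      using JI by (intro PiM_cong) (auto simp: distr_PiM_component N')
    finally show "distr (Pi\<^sub>M I N') (Pi\<^sub>M J N') (\<lambda>x. \<lambda>i\<in>J. x i) = (\<Pi>\<^sub>M i\<in>J. distr (Pi\<^sub>M I N') (N' i) (\<lambda>x. x i))" .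
  qed
  hence "indep_vars N (\<lambda>i x. x i) J"
    by (rule indep_vars_cong[THEN iffD1, rotated 3]) (use JI in \<open>auto simp: N'_def\<close>)
  thus ?thesis using eqI by simp
qed

lemma coord_hoeffding:
  fixes N :: "'i \<Rightarrow> 'z measure" and f :: "'z \<Rightarrow> real"
  assumes N: "\<And>i. i \<in> I \<Longrightarrow> prob_space (N i)" and fin: "finite I" and JI: "J \<subseteq> I" and Jne: "J \<noteq> {}"
    and fm: "\<And>i. i \<in> J \<Longrightarrow> f \<in> borel_measurable (N i)"
    and fb: "\<And>z. 0 \<le> f z \<and> f z \<le> 1" and e: "\<epsilon> \<ge> 0"
  defines "\<mu> \<equiv> (\<Sum>i\<in>J. \<integral>z. f z \<partial>N i)"
  shows "measure (PiM I N) {d\<in>space (PiM I N). (\<Sum>i\<in>J. f (d i)) \<ge> \<mu> + \<epsilon>} \<le> exp (-2 * \<epsilon>\<^sup>2 / card J)"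
    and "measure (PiM I N) {d\<in>space (PiM I N). (\<Sum>i\<in>J. f (d i)) \<le> \<mu> - \<epsilon>} \<le> exp (-2 * \<epsilon>\<^sup>2 / card J)"
proof -
  interpret P: prob_space "PiM I N" by (rule prob_space_PiM) (rule N)
  have finJ: "finite J" using finite_subset[OF JI fin] .
  have ind: "P.indep_vars (\<lambda>_. borel) (\<lambda>i d. f (d i)) J"
    using P.indep_vars_compose2[OF indep_coords[OF N fin JI Jne], of "\<lambda>_. f" "\<lambda>_. borel"] fm by auto
  have ex: "P.expectation (\<lambda>d. f (d i)) = (\<integral>z. f z \<partial>N i)" if "i \<in> J" for i
  proof -
    have "(\<integral>z. f z \<partial>N i) = (\<integral>z. f z \<partial>distr (PiM I N) (N i) (\<lambda>d. d i))"
      using that JI by (subst distr_PiM_component[OF N]) auto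
    also have "\<dots> = P.expectation (\<lambda>d. f (d i))"
      using that JI fm by (intro integral_distr) (auto intro: measurable_component_singleton)
    finally show ?thesis by simp
  qed
  interpret H: Hoeffding_ineq "PiM I N" J "\<lambda>i d. f (d i)" "\<lambda>_. 0" "\<lambda>_. 1" \<mu>
    by unfold_locales (auto simp: finJ ind fb \<mu>_def ex intro!: sum.cong)
  have pos: "(\<Sum>i\<in>J. ((1::real) - 0)\<^sup>2) > 0" using finJ Jne by (simp add: card_gt_0_iff)
  have cJ: "(\<Sum>i\<in>J. ((1::real) - 0)\<^sup>2) = card J" by simp
  show "measure (PiM I N) {d\<in>space (PiM I N). (\<Sum>i\<in>J. f (d i)) \<ge> \<mu> + \<epsilon>} \<le> exp (-2 * \<epsilon>\<^sup>2 / card J)"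
    using H.Hoeffding_ineq_ge[OF e pos] unfolding cJ .
  show "measure (PiM I N) {d\<in>space (PiM I N). (\<Sum>i\<in>J. f (d i)) \<le> \<mu> - \<epsilon>} \<le> exp (-2 * \<epsilon>\<^sup>2 / card J)"
    using H.Hoeffding_ineq_le[OF e pos] unfolding cJ .
qed

lemma agent_hoeffding:
  fixes Pc :: "nat \<Rightarrow> 'z measure" and V :: "'z \<Rightarrow> real" and v :: real
  assumes Pc: "\<And>k. k < M \<Longrightarrow> prob_space (Pc k) \<and> sets (Pc k) = sets S"
    and Vm: "V \<in> borel_measurable S" and k: "k < M" and nk: "0 < n k" and e: "\<epsilon> \<ge> 0"
  defines "p \<equiv> measure (Pc k) {z\<in>space (Pc k). V z \<le> v}"
  shows "measure (cal_measure M n Pc) {d\<in>space (cal_measure M n Pc).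
            real (card {i. i < n k \<and> V (d (k, i)) \<le> v}) \<ge> real (n k) * p + \<epsilon>} \<le> exp (-2 * \<epsilon>\<^sup>2 / n k)"
    and "measure (cal_measure M n Pc) {d\<in>space (cal_measure M n Pc).
            real (card {i. i < n k \<and> V (d (k, i)) \<le> v}) \<le> real (n k) * p - \<epsilon>} \<le> exp (-2 * \<epsilon>\<^sup>2 / n k)"
proof -
  define I where "I = {(k, i). k < M \<and> i < n k}"
  define N where "N = (\<lambda>(k::nat, i::nat). Pc k)"
  define J where "J = Pair k ` {..<n k}"
  define f where "f = (\<lambda>z. indicator {z. V z \<le> v} z :: real)"
  have cal: "cal_measure M n Pc = PiM I N" by (simp add: cal_measure_def I_def N_def)
  have N: "\<And>i. i \<in> I \<Longrightarrow> prob_space (N i)" using Pc by (auto simp: I_def N_def)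
  have finI: "finite I"
  proof -
    have "I \<subseteq> (\<Union>k<M. Pair k ` {..<n k})" by (auto simp: I_def)
    thus ?thesis by (rule finite_subset) auto
  qed
  have JI: "J \<subseteq> I" using k by (auto simp: J_def I_def)
  have Jne: "J \<noteq> {}" using nk by (auto simp: J_def)
  have fm: "f \<in> borel_measurable (N i)" if "i \<in> J" for i
  proof -
    have se: "sets (N i) = sets S" using that Pc k by (auto simp: N_def J_def)
    have "{z. V z \<le> v} \<inter> space S = V -` {..v} \<inter> space S" by auto
    also have "\<dots> \<in> sets S" using Vm by (rule measurable_sets) simp
    finally have "f \<in> borel_measurable S" unfolding f_def by (subst borel_measurable_indicator_iff)
    thus ?thesis by (subst measurable_cong_sets[OF se refl])
  qed
  have fb: "\<And>z. 0 \<le> f z \<and> f z \<le> 1" by (simp add: f_def)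
  have cJ: "card J = n k" by (simp add: J_def card_image inj_on_def)
  have sumJ: "(\<Sum>i\<in>J. f (d i)) = real (card {i. i < n k \<and> V (d (k, i)) \<le> v})" for d
  proof -
    have "(\<Sum>i\<in>J. f (d i)) = (\<Sum>i<n k. f (d (k, i)))" by (simp add: J_def sum.reindex inj_on_def)
    also have "\<dots> = real (card {i\<in>{..<n k}. V (d (k, i)) \<le> v})"
      by (simp add: f_def indicator_def sum.If_cases) (rule arg_cong[where f=card], auto)
    also have "{i\<in>{..<n k}. V (d (k, i)) \<le> v} = {i. i < n k \<and> V (d (k, i)) \<le> v}" by auto
    finally show ?thesis .
  qed
  have mu: "(\<Sum>i\<in>J. \<integral>z. f z \<partial>N i) = real (n k) * p"
  proof -
    have "(\<integral>z. f z \<partial>N i) = p" if "i \<in> J" for i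
    proof -
      have Ni: "N i = Pc k" using that by (auto simp: J_def N_def)
      have "(\<integral>z. f z \<partial>Pc k) = measure (Pc k) ({z. V z \<le> v} \<inter> space (Pc k))"
        unfolding f_def by (rule Bochner_Integration.integral_indicator)
      also have "{z. V z \<le> v} \<inter> space (Pc k) = {z\<in>space (Pc k). V z \<le> v}" by auto
      also have "measure (Pc k) \<dots> = p" by (simp add: p_def)
      finally show ?thesis using Ni by simp
    qed
    hence "(\<Sum>i\<in>J. \<integral>z. f z \<partial>N i) = (\<Sum>i\<in>J. p)" by (intro sum.cong) auto
    thus ?thesis using cJ by simp
  qed
  note H = coord_hoeffding[where I=I and N=N and J=J and f=f and \<epsilon>=\<epsilon>, OF N finI JI Jne fm fb e]
  show "measure (cal_measure M n Pc) {d\<in>space (cal_measure M n Pc).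
            real (card {i. i < n k \<and> V (d (k, i)) \<le> v}) \<ge> real (n k) * p + \<epsilon>} \<le> exp (-2 * \<epsilon>\<^sup>2 / n k)"
    using H(1) unfolding cal sumJ mu cJ .
  show "measure (cal_measure M n Pc) {d\<in>space (cal_measure M n Pc).
            real (card {i. i < n k \<and> V (d (k, i)) \<le> v}) \<le> real (n k) * p - \<epsilon>} \<le> exp (-2 * \<epsilon>\<^sup>2 / n k)"
    using H(2) unfolding cal sumJ mu cJ .
qed

lemma sum_ind_card:
  fixes V :: "'z \<Rightarrow> real" and m k :: nat and d :: "nat \<times> nat \<Rightarrow> 'z"
  shows "(\<Sum>i<m. indicator {z. V z \<le> v} (d (k, i)) :: real) = real (card {i. i < m \<and> V (d (k, i)) \<le> v})"
proof -
  have "(\<Sum>i<m. indicator {z. V z \<le> v} (d (k, i)) :: real) = (\<Sum>i<m. of_bool (V (d (k, i)) \<le> v))"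
    by (simp add: indicator_def)
  also have "\<dots> = real (card ({..<m} \<inter> {i. V (d (k, i)) \<le> v}))" by (rule sum_of_bool_eq) simp_all
  also have "{..<m} \<inter> {i. V (d (k, i)) \<le> v} = {i. i < m \<and> V (d (k, i)) \<le> v}" by auto
  finally show ?thesis .
qed

lemma ind_meas:
  fixes V :: "'z \<Rightarrow> real"
  assumes se: "sets P = sets S" and Vm: "V \<in> borel_measurable S"
  shows "(\<lambda>z. indicator {z. V z \<le> v} z :: real) \<in> borel_measurable P"
proof -
  have "{z. V z \<le> v} \<inter> space S = V -` {..v} \<inter> space S" by auto
  also have "\<dots> \<in> sets S" using Vm by (rule measurable_sets) simp
  finally have "(\<lambda>z. indicator {z. V z \<le> v} z :: real) \<in> borel_measurable S" by (subst borel_measurable_indicator_iff)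
  thus ?thesis by (subst measurable_cong_sets[OF se refl])
qed

lemma cnt_meas:
  fixes V :: "'z \<Rightarrow> real"
  assumes Pc: "\<And>k. k < M \<Longrightarrow> prob_space (Pc k) \<and> sets (Pc k) = sets S"
    and Vm: "V \<in> borel_measurable S" and k: "k < M"
  shows "(\<lambda>d. real (card {i. i < n k \<and> V (d (k, i)) \<le> v})) \<in> borel_measurable (cal_measure M n Pc)"
proof -
  define I where "I = {(k, i). k < M \<and> i < n k}"
  define N where "N = (\<lambda>(k::nat, i::nat). Pc k)"
  have cal: "cal_measure M n Pc = PiM I N" by (simp add: cal_measure_def I_def N_def)
  have "(\<lambda>d. \<Sum>i<n k. indicator {z. V z \<le> v} (d (k, i)) :: real) \<in> borel_measurable (PiM I N)"
  proof (rule borel_measurable_sum)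
    fix i assume i: "i \<in> {..<n k}"
    hence ki: "(k, i) \<in> I" using k by (auto simp: I_def)
    have se: "sets (N (k, i)) = sets S" using Pc k by (simp add: N_def)
    show "(\<lambda>d. indicator {z. V z \<le> v} (d (k, i)) :: real) \<in> borel_measurable (PiM I N)"
      using measurable_compose[OF measurable_component_singleton[OF ki, where M=N] ind_meas[OF se Vm]] by simp
  qed
  thus ?thesis unfolding cal sum_ind_card .
qed

lemma local_meas:
  fixes V :: "'z \<Rightarrow> real"
  assumes Pc: "\<And>k. k < M \<Longrightarrow> prob_space (Pc k) \<and> sets (Pc k) = sets S"
    and Vm: "V \<in> borel_measurable S" and k: "k < M"
    and j: "1 \<le> nat \<lceil>(real (n k) + 1) * (1 - \<alpha>)\<rceil>" "nat \<lceil>(real (n k) + 1) * (1 - \<alpha>)\<rceil> \<le> n k"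
  shows "(\<lambda>d. local_thr V \<alpha> (n k) (\<lambda>i. d (k, i))) \<in> borel_measurable (cal_measure M n Pc)"
proof (rule borel_measurableI_le)
  fix y
  have "{x \<in> space (cal_measure M n Pc). local_thr V \<alpha> (n k) (\<lambda>i. x (k, i)) \<le> y} =
        {x \<in> space (cal_measure M n Pc). real (nat \<lceil>(real (n k) + 1) * (1 - \<alpha>)\<rceil>) \<le> real (card {i. i < n k \<and> V (x (k, i)) \<le> y})}"
    using local_thr_le_iff[OF j] by auto
  also have "\<dots> \<in> sets (cal_measure M n Pc)"
    by (rule borel_measurable_le[OF borel_measurable_const cnt_meas[OF Pc Vm k]])
  finally show "{x \<in> space (cal_measure M n Pc). local_thr V \<alpha> (n k) (\<lambda>i. x (k, i)) \<le> y} \<in> sets (cal_measure M n Pc)" .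
qed

lemma agg_meas:
  fixes V :: "'z \<Rightarrow> real"
  assumes Pc: "\<And>k. k < M \<Longrightarrow> prob_space (Pc k) \<and> sets (Pc k) = sets S"
    and Vm: "V \<in> borel_measurable S"
    and j: "\<And>k. k < M \<Longrightarrow> 1 \<le> nat \<lceil>(real (n k) + 1) * (1 - \<alpha>)\<rceil> \<and> nat \<lceil>(real (n k) + 1) * (1 - \<alpha>)\<rceil> \<le> n k"
  shows "agg_thr V \<alpha> M n \<in> borel_measurable (cal_measure M n Pc)"
  unfolding agg_thr_def
  by (intro borel_measurable_sum borel_measurable_times borel_measurable_const local_meas[OF Pc Vm]) (use j in auto)

lemma measure_Times_prob:
  assumes "prob_space N" "prob_space P" "A \<in> sets N" "B \<in> sets P"
  shows "measure (N \<Otimes>\<^sub>M P) (A \<times> B) = measure N A * measure P B"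
proof -
  interpret N: prob_space N by fact
  interpret P: prob_space P by fact
  interpret pp: pair_prob_space N P ..
  have "emeasure (N \<Otimes>\<^sub>M P) (A \<times> B) = emeasure N A * emeasure P B"
    by (rule P.emeasure_pair_measure_Times) fact+
  hence "ennreal (measure (N \<Otimes>\<^sub>M P) (A \<times> B)) = ennreal (measure N A * measure P B)"
    by (simp add: N.emeasure_eq_measure P.emeasure_eq_measure pp.emeasure_eq_measure ennreal_mult measure_nonneg)
  thus ?thesis by (subst (asm) ennreal_inj) (auto simp: measure_nonneg)
qed

lemma j_bounds:
  assumes "0 < \<alpha>" "\<alpha> < 1" "real n * \<alpha> \<ge> 1"
  shows "1 \<le> nat \<lceil>(real n + 1) * (1 - \<alpha>)\<rceil>" "nat \<lceil>(real n + 1) * (1 - \<alpha>)\<rceil> \<le> n"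
    "(real n + 1) * (1 - \<alpha>) \<le> real (nat \<lceil>(real n + 1) * (1 - \<alpha>)\<rceil>)"
    "real (nat \<lceil>(real n + 1) * (1 - \<alpha>)\<rceil>) < (real n + 1) * (1 - \<alpha>) + 1"
proof -
  have pos: "0 < (real n + 1) * (1 - \<alpha>)" using assms by simp
  have le: "(real n + 1) * (1 - \<alpha>) \<le> real n" using assms by (simp add: algebra_simps)
  have c0: "0 \<le> \<lceil>(real n + 1) * (1 - \<alpha>)\<rceil>" using pos by (simp add: ceiling_le_zero less_le_not_le)
  have rj: "real (nat \<lceil>(real n + 1) * (1 - \<alpha>)\<rceil>) = real_of_int \<lceil>(real n + 1) * (1 - \<alpha>)\<rceil>"
    using c0 by simp
  show "1 \<le> nat \<lceil>(real n + 1) * (1 - \<alpha>)\<rceil>" using pos by (simp add: one_le_ceiling le_nat_iff) 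
  show "nat \<lceil>(real n + 1) * (1 - \<alpha>)\<rceil> \<le> n" using le by (simp add: ceiling_le_iff nat_le_iff)
  show "(real n + 1) * (1 - \<alpha>) \<le> real (nat \<lceil>(real n + 1) * (1 - \<alpha>)\<rceil>)" unfolding rj by (rule le_of_int_ceiling)
  show "real (nat \<lceil>(real n + 1) * (1 - \<alpha>)\<rceil>) < (real n + 1) * (1 - \<alpha>) + 1" unfolding rj using ceiling_correct[of "(real n + 1) * (1 - \<alpha>)"] by linarith
qed

lemma cov_bound:
  fixes V :: "'x \<times> 'y \<Rightarrow> real" and Pc :: "nat \<Rightarrow> ('x \<times> 'y) measure" and n :: "nat \<Rightarrow> nat"
    and Ptest S :: "('x \<times> 'y) measure"
  assumes alpha: "0 < \<alpha>" "\<alpha> < 1" and M_pos: "0 < M"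
    and Vm: "V \<in> borel_measurable S"
    and PT: "prob_space Ptest" "sets Ptest = sets S"
    and Pc: "\<And>k. k < M \<Longrightarrow> prob_space (Pc k) \<and> sets (Pc k) = sets S"
    and del: "0 < \<delta>" "\<delta> \<le> e / 4"
    and G1: "measure Ptest {z\<in>space Ptest. V z \<le> v1} = 1 - \<alpha> - \<delta>"
    and G2: "measure Ptest {z\<in>space Ptest. V z \<le> v2} = 1 - \<alpha> + \<delta>"
    and tv1: "\<And>k. k < M \<Longrightarrow> \<bar>measure (Pc k) {z\<in>space (Pc k). V z \<le> v1} - measure Ptest {z\<in>space Ptest. V z \<le> v1}\<bar> \<le> \<delta> / 2"
    and tv2: "\<And>k. k < M \<Longrightarrow> \<bar>measure (Pc k) {z\<in>space (Pc k). V z \<le> v2} - measure Ptest {z\<in>space Ptest. V z \<le> v2}\<bar> \<le> \<delta> / 2"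
    and nbig: "\<And>k. k < M \<Longrightarrow> real (n k) * \<delta> \<ge> 8 \<and> real (n k) * \<alpha> \<ge> 1 \<and>
                   exp (-2 * (real (n k) * \<delta> / 4)\<^sup>2 / real (n k)) \<le> e / (4 * M)"
  shows "\<bar>measure (cal_measure M n Pc \<Otimes>\<^sub>M Ptest)
            {p \<in> space (cal_measure M n Pc \<Otimes>\<^sub>M Ptest).
               snd (snd p) \<in> C_set V (agg_thr V \<alpha> M n (fst p)) (fst (snd p))}
          - (1 - \<alpha>)\<bar> < e"
proof -
  define Cal where "Cal = cal_measure M n Pc"
  define cnt where "cnt = (\<lambda>k v d. real (card {i. i < n k \<and> V (d (k, i)) \<le> v}))"
  define j where "j = (\<lambda>k. nat \<lceil>(real (n k) + 1) * (1 - \<alpha>)\<rceil>)"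
  define Bad1 where "Bad1 = (\<lambda>k. {d\<in>space Cal. real (j k) \<le> cnt k v1 d})"
  define Bad2 where "Bad2 = (\<lambda>k. {d\<in>space Cal. cnt k v2 d < real (j k)})"
  define B where "B = (\<Union>k<M. Bad1 k \<union> Bad2 k)"
  define L1 where "L1 = {z\<in>space Ptest. V z \<le> v1}"
  define L2 where "L2 = {z\<in>space Ptest. V z \<le> v2}"
  define A where "A = {p \<in> space (Cal \<Otimes>\<^sub>M Ptest). snd (snd p) \<in> C_set V (agg_thr V \<alpha> M n (fst p)) (fst (snd p))}"
  interpret C: prob_space Cal unfolding Cal_def cal_measure_def
    by (rule prob_space_PiM) (use Pc in auto)
  interpret T: prob_space Ptest by (rule PT)
  interpret CT: pair_prob_space Cal Ptest ..
  have VmT: "V \<in> borel_measurable Ptest" using Vm by (subst measurable_cong_sets[OF PT(2) refl])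
  have L1m: "L1 \<in> sets Ptest" unfolding L1_def using VmT by measurable
  have L2m: "L2 \<in> sets Ptest" unfolding L2_def using VmT by measurable
  have jb: "1 \<le> j k" "j k \<le> n k" "(real (n k) + 1) * (1 - \<alpha>) \<le> real (j k)"
    "real (j k) < (real (n k) + 1) * (1 - \<alpha>) + 1" if "k < M" for k
    unfolding j_def using j_bounds[OF alpha, of "n k"] nbig[OF that] by auto
  have npos: "0 < n k" if "k < M" for k
  proof -
    have "real (n k) * \<delta> \<ge> 8" using nbig[OF that] by auto
    thus ?thesis using del by (cases "n k") auto
  qed
  have cntm: "cnt k v \<in> borel_measurable Cal" if "k < M" for k v
    unfolding cnt_def Cal_def by (rule cnt_meas[OF Pc Vm that])
  have Bad1m: "Bad1 k \<in> sets Cal" if "k < M" for k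
    unfolding Bad1_def by (rule borel_measurable_le[OF borel_measurable_const cntm[OF that]])
  have Bad2m: "Bad2 k \<in> sets Cal" if "k < M" for k
    unfolding Bad2_def by (rule borel_measurable_less[OF cntm[OF that] borel_measurable_const])
  have Bm: "B \<in> sets Cal" unfolding B_def using Bad1m Bad2m by auto
  have eM: "e / (4 * M) \<ge> 0" using del by simp
  have PB1: "measure Cal (Bad1 k) \<le> e / (4 * M)" if k: "k < M" for k
  proof -
    define p where "p = measure (Pc k) {z\<in>space (Pc k). V z \<le> v1}"
    define \<epsilon> where "\<epsilon> = real (n k) * \<delta> / 4"
    have nb: "real (n k) * \<delta> \<ge> 8" "real (n k) * \<alpha> \<ge> 1" "exp (-2 * \<epsilon>\<^sup>2 / real (n k)) \<le> e / (4 * M)"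
      using nbig[OF k] by (auto simp: \<epsilon>_def)
    have p: "p \<le> 1 - \<alpha> - \<delta> / 2" using tv1[OF k] G1 unfolding p_def by linarith
    have "real (n k) * p + \<epsilon> \<le> real (n k) * (1 - \<alpha> - \<delta> / 2) + \<epsilon>"
      using p by (intro add_right_mono mult_left_mono) auto
    also have "\<dots> \<le> (real (n k) + 1) * (1 - \<alpha>)"
    proof -
      have "0 \<le> \<delta> * real (n k)" using del by simp
      thus ?thesis using alpha by (simp add: \<epsilon>_def algebra_simps)
    qed
    finally have le: "real (n k) * p + \<epsilon> \<le> real (j k)" using jb(3)[OF k] by linarith
    have "Bad1 k \<subseteq> {d\<in>space Cal. real (n k) * p + \<epsilon> \<le> cnt k v1 d}"
      unfolding Bad1_def using le by auto
    hence "measure Cal (Bad1 k) \<le> measure Cal {d\<in>space Cal. real (n k) * p + \<epsilon> \<le> cnt k v1 d}"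
      by (intro C.finite_measure_mono borel_measurable_le[OF borel_measurable_const cntm[OF k]])
    also have "\<dots> \<le> exp (-2 * \<epsilon>\<^sup>2 / real (n k))"
      unfolding Cal_def cnt_def p_def
      by (rule agent_hoeffding(1)[where M=M and Pc=Pc and S=S and V=V and k=k and n=n, OF Pc Vm k npos[OF k]]) (use del in \<open>auto simp: \<epsilon>_def\<close>)
    finally show ?thesis using nb(3) by linarith
  qed
  have PB2: "measure Cal (Bad2 k) \<le> e / (4 * M)" if k: "k < M" for k
  proof -
    define p where "p = measure (Pc k) {z\<in>space (Pc k). V z \<le> v2}"
    define \<epsilon> where "\<epsilon> = real (n k) * \<delta> / 4"
    have nb: "real (n k) * \<delta> \<ge> 8" "real (n k) * \<alpha> \<ge> 1" "exp (-2 * \<epsilon>\<^sup>2 / real (n k)) \<le> e / (4 * M)"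
      using nbig[OF k] by (auto simp: \<epsilon>_def)
    have p: "p \<ge> 1 - \<alpha> + \<delta> / 2" using tv2[OF k] G2 unfolding p_def by linarith
    have "(real (n k) + 1) * (1 - \<alpha>) + 1 \<le> real (n k) * (1 - \<alpha> + \<delta> / 2) - \<epsilon>"
      using alpha del nb(1) by (simp add: \<epsilon>_def algebra_simps)
    also have "\<dots> \<le> real (n k) * p - \<epsilon>"
      using p by (intro diff_right_mono mult_left_mono) auto
    finally have le: "real (j k) \<le> real (n k) * p - \<epsilon>" using jb(4)[OF k] by linarith
    have "Bad2 k \<subseteq> {d\<in>space Cal. cnt k v2 d \<le> real (n k) * p - \<epsilon>}"
      unfolding Bad2_def using le by auto
    hence "measure Cal (Bad2 k) \<le> measure Cal {d\<in>space Cal. cnt k v2 d \<le> real (n k) * p - \<epsilon>}"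
      by (intro C.finite_measure_mono borel_measurable_le[OF cntm[OF k] borel_measurable_const])
    also have "\<dots> \<le> exp (-2 * \<epsilon>\<^sup>2 / real (n k))"
      unfolding Cal_def cnt_def p_def
      by (rule agent_hoeffding(2)[where M=M and Pc=Pc and S=S and V=V and k=k and n=n, OF Pc Vm k npos[OF k]]) (use del in \<open>auto simp: \<epsilon>_def\<close>)
    finally show ?thesis using nb(3) by linarith
  qed
  have PB: "measure Cal B \<le> e / 2"
  proof -
    have "measure Cal B \<le> (\<Sum>k<M. measure Cal (Bad1 k \<union> Bad2 k))"
      unfolding B_def by (rule measure_UNION_le) (use Bad1m Bad2m in auto)
    also have "\<dots> \<le> (\<Sum>k<M. e / (4 * M) + e / (4 * M))"
    proof (rule sum_mono)
      fix k assume "k \<in> {..<M}"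
      hence k: "k < M" by simp
      have "measure Cal (Bad1 k \<union> Bad2 k) \<le> measure Cal (Bad1 k) + measure Cal (Bad2 k)"
        by (rule measure_Un_le) (use Bad1m[OF k] Bad2m[OF k] in auto)
      thus "measure Cal (Bad1 k \<union> Bad2 k) \<le> e / (4 * M) + e / (4 * M)" using PB1[OF k] PB2[OF k] by linarith
    qed
    also have "\<dots> = e / 2" using M_pos by (simp add: field_simps)
    finally show ?thesis .
  qed
  have jbk: "1 \<le> nat \<lceil>(real (n k) + 1) * (1 - \<alpha>)\<rceil> \<and> nat \<lceil>(real (n k) + 1) * (1 - \<alpha>)\<rceil> \<le> n k" if "k < M" for k
    using jb[OF that] by (simp add: j_def)
  have aggm: "agg_thr V \<alpha> M n \<in> borel_measurable Cal"
    unfolding Cal_def by (rule agg_meas[OF Pc Vm jbk])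
  have Aeq: "A = {p \<in> space (Cal \<Otimes>\<^sub>M Ptest). V (snd p) \<le> agg_thr V \<alpha> M n (fst p)}"
    by (auto simp: A_def C_set_def)
  have Am: "A \<in> sets (Cal \<Otimes>\<^sub>M Ptest)"
    unfolding Aeq by (rule borel_measurable_le[OF measurable_compose[OF measurable_snd VmT] measurable_compose[OF measurable_fst aggm]])
  have agg_good: "v1 < agg_thr V \<alpha> M n d \<and> agg_thr V \<alpha> M n d \<le> v2" if d: "d \<in> space Cal - B" for d
  proof -
    have loc: "v1 < local_thr V \<alpha> (n k) (\<lambda>i. d (k, i)) \<and> local_thr V \<alpha> (n k) (\<lambda>i. d (k, i)) \<le> v2" if k: "k < M" for k
    proof -
      have "d \<notin> Bad1 k" "d \<notin> Bad2 k" using d k by (auto simp: B_def)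
      hence c1: "\<not> j k \<le> card {i. i < n k \<and> V (d (k, i)) \<le> v1}" and c2: "j k \<le> card {i. i < n k \<and> V (d (k, i)) \<le> v2}"
        using d by (auto simp: Bad1_def Bad2_def cnt_def)
      have "local_thr V \<alpha> (n k) (\<lambda>i. d (k, i)) \<le> v2"
        using local_thr_le_iff[of "n k" \<alpha> V "\<lambda>i. d (k, i)" v2] jbk[OF k] c2 by (simp add: j_def)
      moreover have "\<not> local_thr V \<alpha> (n k) (\<lambda>i. d (k, i)) \<le> v1"
        using local_thr_le_iff[of "n k" \<alpha> V "\<lambda>i. d (k, i)" v1] jbk[OF k] c1 by (simp add: j_def)
      ultimately show ?thesis by simp
    qed
    define tot where "tot = real (total_size M n)"
    have totpos: "0 < tot"
    proof -
      have "0 < n 0" using npos M_pos by simp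
      moreover have "n 0 \<le> total_size M n" unfolding total_size_def
        using M_pos by (intro member_le_sum) auto
      ultimately show ?thesis by (simp add: tot_def)
    qed
    have wsum: "(\<Sum>k<M. real (n k) / tot) = 1"
      using totpos by (simp add: tot_def total_size_def flip: sum_divide_distrib)
    have agg: "agg_thr V \<alpha> M n d = (\<Sum>k<M. real (n k) / tot * local_thr V \<alpha> (n k) (\<lambda>i. d (k, i)))"
      by (simp add: agg_thr_def tot_def)
    have "v1 = (\<Sum>k<M. real (n k) / tot) * v1" using wsum by simp
    also have "\<dots> = (\<Sum>k<M. real (n k) / tot * v1)" by (rule sum_distrib_right)
    also have "\<dots> < agg_thr V \<alpha> M n d" unfolding agg
      using M_pos loc npos totpos by (intro sum_strict_mono mult_strict_left_mono) auto
    finally have 1: "v1 < agg_thr V \<alpha> M n d" .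
    have "agg_thr V \<alpha> M n d \<le> (\<Sum>k<M. real (n k) / tot * v2)" unfolding agg
      using loc totpos by (intro sum_mono mult_left_mono) auto
    also have "\<dots> = (\<Sum>k<M. real (n k) / tot) * v2" by (rule sum_distrib_right[symmetric])
    also have "\<dots> = v2" using wsum by simp
    finally show ?thesis using 1 by simp
  qed
  have spc: "space (Cal \<Otimes>\<^sub>M Ptest) = space Cal \<times> space Ptest" by (rule space_pair_measure)
  have sub1: "(space Cal - B) \<times> L1 \<subseteq> A"
    unfolding Aeq spc using agg_good by (force simp: L1_def)
  have sub2: "A \<subseteq> (B \<times> space Ptest) \<union> (space Cal \<times> L2)"
  proof
    fix p assume p: "p \<in> A"
    show "p \<in> (B \<times> space Ptest) \<union> (space Cal \<times> L2)"
    proof (cases "fst p \<in> B")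
      case True thus ?thesis using p unfolding Aeq spc by auto
    next
      case False
      hence "agg_thr V \<alpha> M n (fst p) \<le> v2" using p agg_good unfolding Aeq spc by auto
      thus ?thesis using p False unfolding Aeq spc L2_def by auto
    qed
  qed
  have PG: "measure Cal (space Cal - B) = 1 - measure Cal B" by (rule C.prob_compl[OF Bm])
  have PBn: "0 \<le> measure Cal B" by simp
  have G1': "measure Ptest L1 = 1 - \<alpha> - \<delta>" using G1 by (simp add: L1_def)
  have G2': "measure Ptest L2 = 1 - \<alpha> + \<delta>" using G2 by (simp add: L2_def)
  have "(1 - measure Cal B) * (1 - \<alpha> - \<delta>) = measure (Cal \<Otimes>\<^sub>M Ptest) ((space Cal - B) \<times> L1)"
    using measure_Times_prob[OF C.prob_space_axioms T.prob_space_axioms _ L1m, of "space Cal - B"] Bm PG G1'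
    by auto
  also have "\<dots> \<le> measure (Cal \<Otimes>\<^sub>M Ptest) A" by (rule CT.finite_measure_mono[OF sub1 Am])
  finally have low: "(1 - measure Cal B) * (1 - \<alpha> - \<delta>) \<le> measure (Cal \<Otimes>\<^sub>M Ptest) A" .
  have "measure (Cal \<Otimes>\<^sub>M Ptest) A \<le> measure (Cal \<Otimes>\<^sub>M Ptest) ((B \<times> space Ptest) \<union> (space Cal \<times> L2))"
    by (rule CT.finite_measure_mono[OF sub2]) (use Bm L2m in auto)
  also have "\<dots> \<le> measure (Cal \<Otimes>\<^sub>M Ptest) (B \<times> space Ptest) + measure (Cal \<Otimes>\<^sub>M Ptest) (space Cal \<times> L2)"
    by (rule measure_Un_le) (use Bm L2m in auto)
  also have "\<dots> = measure Cal B + (1 - \<alpha> + \<delta>)"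
    using measure_Times_prob[OF C.prob_space_axioms T.prob_space_axioms Bm, of "space Ptest"]
      measure_Times_prob[OF C.prob_space_axioms T.prob_space_axioms _ L2m, of "space Cal"] G2'
    by (simp add: C.prob_space T.prob_space)
  finally have up: "measure (Cal \<Otimes>\<^sub>M Ptest) A \<le> measure Cal B + (1 - \<alpha> + \<delta>)" .
  have "measure Cal B * (1 - \<alpha> - \<delta>) \<le> measure Cal B * 1"
    using PBn alpha del by (intro mult_left_mono) auto
  hence low2: "1 - \<alpha> - \<delta> - measure Cal B \<le> measure (Cal \<Otimes>\<^sub>M Ptest) A" using low by (simp add: algebra_simps)
  have "\<bar>measure (Cal \<Otimes>\<^sub>M Ptest) A - (1 - \<alpha>)\<bar> < e" using low2 up PB del by auto
  thus ?thesis by (simp add: A_def Cal_def)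
qed

lemma G_hits:
  fixes V :: "'z \<Rightarrow> real" and Ptest :: "'z measure"
  assumes PT: "prob_space Ptest" and VmT: "V \<in> borel_measurable Ptest"
    and cont: "continuous_on UNIV (\<lambda>v. measure Ptest {z \<in> space Ptest. V z \<le> v})"
    and y: "0 < y" "y < 1"
  shows "\<exists>v. measure Ptest {z \<in> space Ptest. V z \<le> v} = y"
proof -
  define G where "G = (\<lambda>v. measure Ptest {z \<in> space Ptest. V z \<le> v})"
  interpret T: prob_space Ptest by (rule PT)
  interpret D: real_distribution "distr Ptest borel V"
  proof (rule real_distribution.intro)
    show "prob_space (distr Ptest borel V)" by (rule T.prob_space_distr[OF VmT])
    show "real_distribution_axioms (distr Ptest borel V)" by (rule real_distribution_axioms.intro) simp
  qed
  have cdfG: "cdf (distr Ptest borel V) = G"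
  proof
    fix v
    have "cdf (distr Ptest borel V) v = measure Ptest (V -` {..v} \<inter> space Ptest)"
      by (simp add: cdf_def measure_distr VmT)
    also have "V -` {..v} \<inter> space Ptest = {z \<in> space Ptest. V z \<le> v}" by auto
    finally show "cdf (distr Ptest borel V) v = G v" by (simp add: G_def)
  qed
  have "eventually (\<lambda>v. G v < y) at_bot"
    using order_tendstoD(2)[OF D.cdf_lim_at_bot[unfolded cdfG], of y] y by simp
  then obtain a where a: "G a < y" by (auto simp: eventually_at_bot_linorder)
  have "eventually (\<lambda>v. y < G v) at_top"
    using order_tendstoD(1)[OF D.cdf_lim_at_top_prob[unfolded cdfG], of y] y by simp
  then obtain b where b: "y < G b" by (auto simp: eventually_at_top_linorder)
  have ab: "a \<le> b"
  proof (rule ccontr)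
    assume "\<not> a \<le> b"
    hence "G b \<le> G a" unfolding cdfG[symmetric] by (intro D.cdf_nondecreasing) simp
    thus False using a b by simp
  qed
  have "\<exists>x. a \<le> x \<and> x \<le> b \<and> G x = y"
    by (rule IVT') (use a b ab continuous_on_subset[OF cont] in \<open>auto simp: G_def\<close>)
  thus ?thesis by (auto simp: G_def)
qed

lemma tv_bound:
  assumes "prob_space P" "prob_space Q" "A \<in> sets P"
  shows "\<bar>measure P A - measure Q A\<bar> \<le> tv_dist P Q"
  unfolding tv_dist_def
proof (rule cSUP_upper[OF assms(3)])
  interpret P: prob_space P by fact
  interpret Q: prob_space Q by fact
  show "bdd_above ((\<lambda>A. \<bar>measure P A - measure Q A\<bar>) ` sets P)"
  proof (rule bdd_aboveI2)
    fix A show "\<bar>measure P A - measure Q A\<bar> \<le> 2"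
      using P.prob_le_1[of A] Q.prob_le_1[of A] measure_nonneg[of P A] measure_nonneg[of Q A] by linarith
  qed
qed

lemma exp_small:
  fixes \<delta> e :: real and m M :: nat
  assumes d: "0 < \<delta>" and e: "0 < e" and M: "0 < M" and m: "real m \<ge> 32 * M / (e * \<delta>\<^sup>2)" and mp: "0 < m"
  shows "exp (-2 * (real m * \<delta> / 4)\<^sup>2 / real m) \<le> e / (4 * M)"
proof -
  define x where "x = real m * \<delta>\<^sup>2 / 8"
  have xpos: "0 < x" using d mp by (simp add: x_def)
  have eq: "-2 * (real m * \<delta> / 4)\<^sup>2 / real m = - x" using mp by (simp add: x_def power2_eq_square field_simps)
  have "exp (- x) = inverse (exp x)" by (simp add: exp_minus)
  also have "\<dots> \<le> inverse x"
    using xpos exp_ge_add_one_self[of x] by (intro le_imp_inverse_le) linarith+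
  also have "inverse x \<le> e / (4 * M)"
  proof -
    have "32 * M / (e * \<delta>\<^sup>2) * (e * \<delta>\<^sup>2) \<le> real m * (e * \<delta>\<^sup>2)"
      using m d e by (intro mult_right_mono) auto
    hence "32 * real M \<le> real m * (e * \<delta>\<^sup>2)" using d e by simp
    hence "4 * real M \<le> e * x" by (simp add: x_def algebra_simps)
    thus ?thesis using xpos M by (simp add: field_simps)
  qed
  finally show ?thesis unfolding eq .
qed

theorem theorem2:
  fixes \<alpha> :: real and M :: nat
    and S :: "('x \<times> 'y) measure"
    and V :: "'x \<times> 'y \<Rightarrow> real"
    and Ptest :: "('x \<times> 'y) measure"
    and Pc :: "nat \<Rightarrow> nat \<Rightarrow> ('x \<times> 'y) measure"
    and n :: "nat \<Rightarrow> nat \<Rightarrow> nat"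
  assumes alpha: "0 < \<alpha>" "\<alpha> < 1"
    and M_pos: "0 < M"
    and V_meas: "V \<in> borel_measurable S"
    and P_test: "prob_space Ptest" "sets Ptest = sets S"
    and P_cal: "\<And>t k. k < M \<Longrightarrow> prob_space (Pc t k) \<and> sets (Pc t k) = sets S"
    and G_cont: "continuous_on UNIV (\<lambda>v. measure Ptest {z \<in> space Ptest. V z \<le> v})"
    and n_inf: "\<And>k. k < M \<Longrightarrow> filterlim (\<lambda>t. n t k) at_top sequentially"
    and tv_lim: "(\<lambda>t. SUP k \<in> {..<M}. tv_dist (Pc t k) Ptest) \<longlonglongrightarrow> 0"
    and q_close: "\<And>\<epsilon>. \<epsilon> > 0 \<Longrightarrow>
       (\<lambda>t. measure (cal_measure M (n t) (Pc t))
          {d \<in> space (cal_measure M (n t) (Pc t)).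
             \<bar>agg_thr V \<alpha> M (n t) d - mix_thr V \<alpha> M (n t) d\<bar> > \<epsilon>}) \<longlonglongrightarrow> 0"
  shows "(\<lambda>t. \<bar>measure (cal_measure M (n t) (Pc t) \<Otimes>\<^sub>M Ptest)
            {p \<in> space (cal_measure M (n t) (Pc t) \<Otimes>\<^sub>M Ptest).
               snd (snd p) \<in> C_set V (agg_thr V \<alpha> M (n t) (fst p)) (fst (snd p))}
          - (1 - \<alpha>)\<bar>) \<longlonglongrightarrow> 0"
proof (rule LIMSEQ_I)
  fix e :: real assume e: "0 < e"
  have VmT: "V \<in> borel_measurable Ptest" using V_meas by (subst measurable_cong_sets[OF P_test(2) refl])
  define \<delta> where "\<delta> = min (e / 4) (min (\<alpha> / 2) ((1 - \<alpha>) / 2))"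
  have dpos: "0 < \<delta>" using e alpha by (simp add: \<delta>_def)
  have dle: "\<delta> \<le> e / 4" "\<delta> \<le> \<alpha> / 2" "\<delta> \<le> (1 - \<alpha>) / 2" unfolding \<delta>_def by linarith+
  obtain v1 where G1: "measure Ptest {z \<in> space Ptest. V z \<le> v1} = 1 - \<alpha> - \<delta>"
    using G_hits[OF P_test(1) VmT G_cont, of "1 - \<alpha> - \<delta>"] dle alpha dpos by auto
  obtain v2 where G2: "measure Ptest {z \<in> space Ptest. V z \<le> v2} = 1 - \<alpha> + \<delta>"
    using G_hits[OF P_test(1) VmT G_cont, of "1 - \<alpha> + \<delta>"] dle alpha dpos by auto
  define K :: nat where "K = nat \<lceil>max (8 / \<delta>) (max (1 / \<alpha>) (32 * M / (e * \<delta>\<^sup>2)))\<rceil> + 1"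
  have Kprop: "real m * \<delta> \<ge> 8 \<and> real m * \<alpha> \<ge> 1 \<and> exp (-2 * (real m * \<delta> / 4)\<^sup>2 / real m) \<le> e / (4 * M)"
    if m: "K \<le> m" for m
  proof -
    have "max (8 / \<delta>) (max (1 / \<alpha>) (32 * M / (e * \<delta>\<^sup>2))) \<le> real (nat \<lceil>max (8 / \<delta>) (max (1 / \<alpha>) (32 * M / (e * \<delta>\<^sup>2)))\<rceil>)"
      by linarith
    also have "\<dots> \<le> real m"
    proof -
      have "nat \<lceil>max (8 / \<delta>) (max (1 / \<alpha>) (32 * M / (e * \<delta>\<^sup>2)))\<rceil> \<le> m" using m unfolding K_def by linarith
      thus ?thesis by (simp only: of_nat_le_iff)
    qed
    finally have mx: "8 / \<delta> \<le> real m" "1 / \<alpha> \<le> real m" "32 * M / (e * \<delta>\<^sup>2) \<le> real m" by (simp_all add: max.bounded_iff)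
    have mp: "0 < m" using m by (simp add: K_def)
    have "real m * \<delta> \<ge> 8" using mx(1) dpos by (simp add: field_simps)
    moreover have "real m * \<alpha> \<ge> 1" using mx(2) alpha by (simp add: field_simps)
    moreover have "exp (-2 * (real m * \<delta> / 4)\<^sup>2 / real m) \<le> e / (4 * M)"
      by (rule exp_small[OF dpos e M_pos mx(3) mp])
    ultimately show ?thesis by simp
  qed
  have ev1: "eventually (\<lambda>t. (SUP k \<in> {..<M}. tv_dist (Pc t k) Ptest) < \<delta> / 2) sequentially"
    using order_tendstoD(2)[OF tv_lim, of "\<delta> / 2"] dpos by simp
  have ev2: "eventually (\<lambda>t. \<forall>k\<in>{..<M}. K \<le> n t k) sequentially"
    by (rule eventually_ball_finite) (use n_inf in \<open>auto simp: filterlim_at_top\<close>)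
  obtain N where N: "\<And>t. t \<ge> N \<Longrightarrow> (SUP k \<in> {..<M}. tv_dist (Pc t k) Ptest) < \<delta> / 2 \<and> (\<forall>k\<in>{..<M}. K \<le> n t k)"
    using eventually_conj[OF ev1 ev2] unfolding eventually_sequentially by blast
  show "\<exists>no. \<forall>t\<ge>no. norm (\<bar>measure (cal_measure M (n t) (Pc t) \<Otimes>\<^sub>M Ptest)
            {p \<in> space (cal_measure M (n t) (Pc t) \<Otimes>\<^sub>M Ptest).
               snd (snd p) \<in> C_set V (agg_thr V \<alpha> M (n t) (fst p)) (fst (snd p))}
          - (1 - \<alpha>)\<bar> - 0) < e"
  proof (intro exI allI impI)
    fix t assume t: "N \<le> t"
    have tvb: "\<bar>measure (Pc t k) {z\<in>space (Pc t k). V z \<le> v} - measure Ptest {z\<in>space Ptest. V z \<le> v}\<bar> \<le> \<delta> / 2"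
      if k: "k < M" for k v
    proof -
      have se: "sets (Pc t k) = sets Ptest" using P_cal[OF k] P_test(2) by simp
      have sp: "space (Pc t k) = space Ptest" by (rule sets_eq_imp_space_eq[OF se])
      have Vk: "V \<in> borel_measurable (Pc t k)" using VmT by (subst measurable_cong_sets[OF se refl])
      have Lm: "{z\<in>space (Pc t k). V z \<le> v} \<in> sets (Pc t k)" using Vk by measurable
      have "\<bar>measure (Pc t k) {z\<in>space (Pc t k). V z \<le> v} - measure Ptest {z\<in>space Ptest. V z \<le> v}\<bar>
          = \<bar>measure (Pc t k) {z\<in>space (Pc t k). V z \<le> v} - measure Ptest {z\<in>space (Pc t k). V z \<le> v}\<bar>"
        by (simp add: sp)
      also have "\<dots> \<le> tv_dist (Pc t k) Ptest"
        by (rule tv_bound[OF _ P_test(1) Lm]) (use P_cal[OF k] in auto)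
      also have "\<dots> \<le> (SUP k \<in> {..<M}. tv_dist (Pc t k) Ptest)"
        using k by (intro cSUP_upper) auto
      also have "\<dots> \<le> \<delta> / 2" using N[OF t] by simp
      finally show ?thesis .
    qed
    have "\<bar>measure (cal_measure M (n t) (Pc t) \<Otimes>\<^sub>M Ptest)
            {p \<in> space (cal_measure M (n t) (Pc t) \<Otimes>\<^sub>M Ptest).
               snd (snd p) \<in> C_set V (agg_thr V \<alpha> M (n t) (fst p)) (fst (snd p))}
          - (1 - \<alpha>)\<bar> < e"
    proof (rule cov_bound[OF alpha M_pos V_meas P_test P_cal dpos dle(1) G1 G2 tvb tvb])
      fix k assume "k < M"
      hence "K \<le> n t k" using N[OF t] by simp
      thus "real (n t k) * \<delta> \<ge> 8 \<and> real (n t k) * \<alpha> \<ge> 1 \<and>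
                   exp (-2 * (real (n t k) * \<delta> / 4)\<^sup>2 / real (n t k)) \<le> e / (4 * M)"
        by (rule Kprop)
    qed
    thus "norm (\<bar>measure (cal_measure M (n t) (Pc t) \<Otimes>\<^sub>M Ptest)
            {p \<in> space (cal_measure M (n t) (Pc t) \<Otimes>\<^sub>M Ptest).
               snd (snd p) \<in> C_set V (agg_thr V \<alpha> M (n t) (fst p)) (fst (snd p))}
          - (1 - \<alpha>)\<bar> - 0) < e" by simp
  qed
qed

end
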